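(* Let $T>0$, $N=2$, $0<M<1$. Consider the problem of minimizing $\mathbb V(T)=\frac12(\xi_1(T)^2+\xi_2(T)^2)$ over $\alpha\in\mathcal U_M$, where $\dot\xi_i=-\xi_i+(1-\alpha_i)\bar\xi$ ($i=1,2$), $\bar\xi=\frac12(\xi_1+\xi_2)$, with initial datum satisfying $\bar\xi(0)>0$ and $\xi_1(0)>\xi_2(0)$. Let $\alpha\in\mathcal U_M$ be an optimal control whose trajectory $\xi$ satisfies $\xi_1(t)\ge\xi_2(t)$ for all $t\in[0,T]$. Define $$t_0=\frac{2}{2-M}\ln\Big(\frac{2-M}{2M}\,\frac{\xi_1(0)-\xi_2(0)}{\bar\xi(0)}+1\Big).$$ Then: (i) $T\ge t_0$ if and only if $\xi_1(T)=\xi_2(T)$; in this case $\alpha_1+\alpha_2\equiv M$ (so $\bar\xi(t)=\bar\xi(0)e^{-Mt/2}$). (ii) If $T<t_0$, then there exists $t^*\in[0,T)$ such that $\alpha(t)=(0,0)$ for all $t\in[0,t^* )$ and $\alpha(t)=(M,0)$ for all $t\in[t^*,T]$.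
   Context: $\mathcal U_M$ is the set of measurable $\alpha:[0,T]\to[0,1]^2$ with $\alpha_1(t)+\alpha_2(t)\le M$ for all $t$. *)

theory Defs
  imports "HOL-Analysis.Analysis"
begin

definition admissible :: "real \<Rightarrow> real \<Rightarrow> (real \<Rightarrow> real) \<Rightarrow> (real \<Rightarrow> real) \<Rightarrow> bool" where
  "admissible T M a1 a2 \<longleftrightarrow>
     a1 \<in> borel_measurable (lebesgue_on {0..T}) \<and> a2 \<in> borel_measurable (lebesgue_on {0..T}) \<and>
     (\<forall>t\<in>{0..T}. 0 \<le> a1 t \<and> a1 t \<le> 1 \<and> 0 \<le> a2 t \<and> a2 t \<le> 1 \<and> a1 t + a2 t \<le> M)"

definition is_traj :: "real \<Rightarrow> (real \<Rightarrow> real) \<Rightarrow> (real \<Rightarrow> real) \<Rightarrow> (real \<Rightarrow> real) \<Rightarrow> (real \<Rightarrow> real) \<Rightarrow> bool" where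
  "is_traj T a1 a2 x1 x2 \<longleftrightarrow>
     continuous_on {0..T} x1 \<and> continuous_on {0..T} x2 \<and>
     (\<forall>t\<in>{0..T}.
        ((\<lambda>s. - x1 s + (1 - a1 s) * ((x1 s + x2 s) / 2)) has_integral (x1 t - x1 0)) {0..t} \<and>
        ((\<lambda>s. - x2 s + (1 - a2 s) * ((x1 s + x2 s) / 2)) has_integral (x2 t - x2 0)) {0..t})"

definition cost :: "real \<Rightarrow> (real \<Rightarrow> real) \<Rightarrow> (real \<Rightarrow> real) \<Rightarrow> real" where
  "cost T x1 x2 = (x1 T ^ 2 + x2 T ^ 2) / 2"

definition optimal :: "real \<Rightarrow> real \<Rightarrow> (real \<Rightarrow> real) \<Rightarrow> (real \<Rightarrow> real) \<Rightarrow> (real \<Rightarrow> real) \<Rightarrow> (real \<Rightarrow> real) \<Rightarrow> bool" where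
  "optimal T M a1 a2 x1 x2 \<longleftrightarrow>
     admissible T M a1 a2 \<and> is_traj T a1 a2 x1 x2 \<and>
     (\<forall>b1 b2 y1 y2. admissible T M b1 b2 \<and> is_traj T b1 b2 y1 y2 \<and>
        y1 0 = x1 0 \<and> y2 0 = x2 0 \<longrightarrow> cost T x1 x2 \<le> cost T y1 y2)"

end

theory Submission
  imports Defs
begin


lemma mb_integrable:
  fixes f :: "real \<Rightarrow> real"
  assumes "f \<in> borel_measurable (lebesgue_on {a..b})" "\<And>x. x \<in> {a..b} \<Longrightarrow> \<bar>f x\<bar> \<le> B"
  shows "f integrable_on {a..b}"
  using measurable_bounded_by_integrable_imp_integrable_real[of f "{a..b}" "\<lambda>_. B"] assms
  by auto

lemma Dbound_le:
  fixes f :: "real \<Rightarrow> real"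
  assumes f: "f integrable_on {0..T}" and st: "0 \<le> t" "t \<le> s" "s \<le> T"
    and b: "\<And>r. t \<le> r \<Longrightarrow> r \<le> s \<Longrightarrow> \<bar>f r\<bar> \<le> B"
  shows "\<bar>integral {0..s} f - integral {0..t} f\<bar> \<le> B * \<bar>s - t\<bar>"
proof -
  have fs: "f integrable_on {0..s}" using f integrable_on_subinterval st by fastforce
  have "integral {0..t} f + integral {t..s} f = integral {0..s} f"
    using Henstock_Kurzweil_Integration.integral_combine[OF st(1) st(2) fs] .
  moreover have fts: "f integrable_on {t..s}" using f integrable_on_subinterval st by fastforce
  have B0: "0 \<le> B" using b[of s] st by auto
  have "norm (integral {t..s} f) \<le> B * (s - t)"
    using has_integral_bound[of B f "integral {t..s} f" t s] B0 fts b st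
    by (auto simp: cbox_interval content_real)
  ultimately show ?thesis using st by (auto simp: cbox_interval)
qed

lemma Dbound:
  fixes f :: "real \<Rightarrow> real"
  assumes f: "f integrable_on {0..T}" and st: "s \<in> {0..T}" "t \<in> {0..T}"
    and b: "\<And>r. min s t \<le> r \<Longrightarrow> r \<le> max s t \<Longrightarrow> \<bar>f r\<bar> \<le> B"
  shows "\<bar>integral {0..s} f - integral {0..t} f\<bar> \<le> B * \<bar>s - t\<bar>"
proof (cases "t \<le> s")
  case True
  then show ?thesis using Dbound_le[OF f, of t s B] st b by auto
next
  case False
  then have "\<bar>integral {0..t} f - integral {0..s} f\<bar> \<le> B * \<bar>t - s\<bar>"
    using Dbound_le[OF f, of s t B] st b by auto
  then show ?thesis by (simp add: abs_minus_commute)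
qed

lemma Dbound':
  fixes f :: "real \<Rightarrow> real"
  assumes f: "f integrable_on {0..T}" and st: "s \<in> {0..T}" "t \<in> {0..T}"
    and b: "\<And>r. r \<in> {0..T} \<Longrightarrow> \<bar>f r\<bar> \<le> B"
  shows "\<bar>integral {0..s} f - integral {0..t} f\<bar> \<le> B * \<bar>s - t\<bar>"
proof (rule Dbound[OF f st])
  fix r assume "min s t \<le> r" "r \<le> max s t"
  then have "r \<in> {0..T}" using st by (auto simp: min_def max_def split: if_splits)
  then show "\<bar>f r\<bar> \<le> B" by (rule b)
qed

lemma abs_mul_le:
  fixes a b :: real
  assumes "\<bar>a\<bar> \<le> A" "\<bar>b\<bar> \<le> B" shows "\<bar>a * b\<bar> \<le> A * B"
  unfolding abs_mult using assms by (intro mult_mono) auto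

lemma const_by_quad:
  fixes E :: "real \<Rightarrow> real"
  assumes d: "d > 0" 
    and q: "\<And>s t. s \<in> {0..T} \<Longrightarrow> t \<in> {0..T} \<Longrightarrow> \<bar>s - t\<bar> < d \<Longrightarrow> \<bar>E s - E t\<bar> \<le> C * (s - t)^2"
    and t: "t \<in> {0..T}"
  shows "E t = E 0"
proof -
  have der: "(E has_field_derivative 0) (at x within {0..T})" if x: "x \<in> {0..T}" for x
  proof -
    have "((\<lambda>y. (E y - E x) / (y - x)) \<longlongrightarrow> 0) (at x within {0..T})"
    proof (rule Lim_null_comparison)
      show "\<forall>\<^sub>F y in at x within {0..T}. norm ((E y - E x) / (y - x)) \<le> \<bar>C\<bar> * \<bar>y - x\<bar>"
        unfolding eventually_at
      proof (intro exI[of _ d] conjI ballI impI d)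
        fix y assume y0: "y \<in> {0..T}" and y1: "y \<noteq> x \<and> dist y x < d"
        have y: "y \<in> {0..T} \<and> 0 < dist y x \<and> dist y x < d" using y0 y1 by auto
        then have "\<bar>E y - E x\<bar> \<le> C * (y - x)^2" using q[of y x] x by (auto simp: dist_real_def)
        also have "\<dots> \<le> \<bar>C\<bar> * \<bar>y - x\<bar> * \<bar>y - x\<bar>" by (simp add: power2_eq_square abs_mult_self_eq mult.assoc mult_right_mono)
        finally have "\<bar>E y - E x\<bar> \<le> \<bar>C\<bar> * \<bar>y - x\<bar> * \<bar>y - x\<bar>" .
        moreover have "\<bar>y - x\<bar> > 0" using y by (auto simp: dist_real_def)
        ultimately show "norm ((E y - E x) / (y - x)) \<le> \<bar>C\<bar> * \<bar>y - x\<bar>"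
          by (simp add: abs_divide divide_le_eq)
      qed
      show "((\<lambda>y. \<bar>C\<bar> * \<bar>y - x\<bar>) \<longlongrightarrow> 0) (at x within {0..T})"
      proof -
        have "((\<lambda>y. \<bar>C\<bar> * \<bar>y - x\<bar>) \<longlongrightarrow> \<bar>C\<bar> * \<bar>x - x\<bar>) (at x within {0..T})"
          by (intro tendsto_intros)
        then show ?thesis by simp
      qed
    qed
    then show ?thesis by (simp add: has_field_derivative_iff)
  qed
  obtain c where "\<forall>x\<in>{0..T}. E x = c"
    using has_field_derivative_zero_constant[of "{0..T}" E] der by auto
  moreover have "0 \<in> {0..T}" using t by auto
  ultimately show ?thesis using t by auto
qed

lemma exp_quad:
  fixes x :: real assumes "\<bar>x\<bar> \<le> 1" shows "\<bar>exp x - 1 - x\<bar> \<le> x^2"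
proof (cases "x \<ge> 0")
  case True
  have "1 + x \<le> exp x" by (rule exp_ge_add_one_self)
  moreover have "0 \<le> x^2" by simp
  ultimately show ?thesis using exp_bound[of x] True assms unfolding abs_le_iff by linarith
next
  case False
  define y where "y = - x"
  have y: "0 < y" "y \<le> 1" using False assms y_def by auto
  have "1 + y \<le> exp y" by (rule exp_ge_add_one_self)
  then have "exp x \<le> 1 / (1 + y)" using y by (simp add: y_def exp_minus field_simps)
  also have "\<dots> \<le> 1 - y + y^2"
  proof -
    have "1 \<le> (1 - y + y^2) * (1 + y)" using y by (simp add: algebra_simps power2_eq_square power3_eq_cube)
    then show ?thesis using y by (simp add: divide_le_eq)
  qed
  finally have "exp x \<le> 1 + x + x^2" by (simp add: y_def)
  moreover have "1 + x \<le> exp x" by (rule exp_ge_add_one_self)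
  moreover have "0 \<le> x^2" by simp
  ultimately show ?thesis unfolding abs_le_iff by linarith
qed

lemma exp_lip:
  fixes a b :: real
  shows "\<bar>exp a - exp b\<bar> \<le> exp (max a b) * \<bar>a - b\<bar>"
proof -
  have *: "exp v - exp u \<le> exp v * (v - u)" if "u \<le> v" for u v :: real
  proof -
    have "1 + (u - v) \<le> exp (u - v)" by (rule exp_ge_add_one_self)
    then have "exp v * (1 + (u - v)) \<le> exp v * exp (u - v)" by simp
    then show ?thesis by (simp add: exp_diff algebra_simps)
  qed
  show ?thesis
  proof (cases "b \<le> a")
    case True then show ?thesis using *[of b a] by (auto simp: max_def)
  next
    case False then show ?thesis using *[of a b] by (auto simp: max_def)
  qed
qed




lemma int_lin2:
  fixes f g :: "real \<Rightarrow> real"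
  assumes "f integrable_on {0..T}" "g integrable_on {0..T}" "x \<in> {0..T}"
  shows "integral {0..x} (\<lambda>r. c1 * f r + c2 * g r) = c1 * integral {0..x} f + c2 * integral {0..x} g"
proof -
  have "f integrable_on {0..x}" "g integrable_on {0..x}"
    using assms integrable_on_subinterval[of _ "{0..T}" 0 x] by auto
  then show ?thesis
    by (subst Henstock_Kurzweil_Integration.integral_add) (auto intro: integrable_on_mult_right)
qed

lemma lin_ode:
  fixes p q y :: "real \<Rightarrow> real"
  assumes T: "0 \<le> T"
    and cy: "continuous_on {0..T} y"
    and mp: "p \<in> borel_measurable (lebesgue_on {0..T})"
    and mq: "q \<in> borel_measurable (lebesgue_on {0..T})"
    and bp: "\<And>t. t \<in> {0..T} \<Longrightarrow> \<bar>p t\<bar> \<le> K"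
    and bq: "\<And>t. t \<in> {0..T} \<Longrightarrow> \<bar>q t\<bar> \<le> K"
    and hy: "\<And>t. t \<in> {0..T} \<Longrightarrow> ((\<lambda>s. p s * y s + q s) has_integral (y t - y 0)) {0..t}"
    and t: "t \<in> {0..T}"
  shows "y t * exp (- integral {0..t} p) = y 0 + integral {0..t} (\<lambda>s. exp (- integral {0..s} p) * q s)"
proof -
  define P where "P = (\<lambda>t. integral {0..t} p)"
  define A where "A = (\<lambda>t. exp (- P t))"
  define g where "g = (\<lambda>s. p s * y s + q s)"
  have K0: "0 \<le> K" using bp[of 0] T by auto
  have ip: "p integrable_on {0..T}" using mb_integrable[OF mp bp] .
  have iq: "q integrable_on {0..T}" using mb_integrable[OF mq bq] .
  have cP: "continuous_on {0..T} P" unfolding P_def using indefinite_integral_continuous_1[OF ip] .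
  have cA: "continuous_on {0..T} A" unfolding A_def by (intro continuous_intros cP)
  have mA: "A \<in> borel_measurable (lebesgue_on {0..T})"
    by (rule continuous_imp_measurable_on_sets_lebesgue[OF cA]) auto
  have my: "y \<in> borel_measurable (lebesgue_on {0..T})"
    by (rule continuous_imp_measurable_on_sets_lebesgue[OF cy]) auto
  obtain Y where Y: "\<And>t. t \<in> {0..T} \<Longrightarrow> \<bar>y t\<bar> \<le> Y" "0 \<le> Y"
    using continuous_on_compact_bound[OF compact_Icc cy] by (metis real_norm_def)
  have P0: "P 0 = 0" by (simp add: P_def)
  have Plip: "\<bar>P s - P r\<bar> \<le> K * \<bar>s - r\<bar>" if "s \<in> {0..T}" "r \<in> {0..T}" for s r
  proof -
    have "\<And>u. min s r \<le> u \<Longrightarrow> u \<le> max s r \<Longrightarrow> \<bar>p u\<bar> \<le> K"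
      using bp that by (auto simp: min_def max_def split: if_splits)
    then show ?thesis unfolding P_def using Dbound[OF ip that, of K] by auto
  qed
  have Pb: "\<bar>P s\<bar> \<le> K * T" if "s \<in> {0..T}" for s
  proof -
    have "\<bar>P s - P 0\<bar> \<le> K * \<bar>s - 0\<bar>" using Plip[OF that, of 0] T by auto
    also have "\<dots> \<le> K * T" using that K0 by (auto intro: mult_left_mono)
    finally show ?thesis by (simp add: P0)
  qed
  define EA where "EA = exp (K * T)"
  have Ab: "0 < A s \<and> A s \<le> EA" if "s \<in> {0..T}" for s
    using Pb[OF that] unfolding A_def EA_def by auto
  have Aabs: "\<bar>A s\<bar> \<le> EA" if "s \<in> {0..T}" for s using Ab[OF that] by auto
  have Alip: "\<bar>A s - A r\<bar> \<le> EA * K * \<bar>s - r\<bar>" if "s \<in> {0..T}" "r \<in> {0..T}" for s r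
  proof -
    have "\<bar>A s - A r\<bar> \<le> exp (max (- P s) (- P r)) * \<bar>- P s - - P r\<bar>"
      unfolding A_def by (rule exp_lip)
    also have "\<dots> \<le> EA * (K * \<bar>s - r\<bar>)"
    proof (rule mult_mono)
      show "exp (max (- P s) (- P r)) \<le> EA" using Pb[OF that(1)] Pb[OF that(2)] unfolding EA_def
        by (auto simp: max_def)
      show "\<bar>- P s - - P r\<bar> \<le> K * \<bar>s - r\<bar>" using Plip[OF that] by simp
    qed (auto simp: EA_def)
    finally show ?thesis by (simp add: mult.assoc)
  qed
  have mg: "g \<in> borel_measurable (lebesgue_on {0..T})" unfolding g_def using mp mq my by measurable
  have gb: "\<bar>g s\<bar> \<le> K * Y + K" if "s \<in> {0..T}" for s
  proof -
    have "\<bar>g s\<bar> \<le> \<bar>p s\<bar> * \<bar>y s\<bar> + \<bar>q s\<bar>" unfolding g_def by (simp add: abs_mult[symmetric] abs_triangle_ineq)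
    also have "\<dots> \<le> K * Y + K" using bp[OF that] bq[OF that] Y(1)[OF that] K0
      by (intro add_mono mult_mono) auto
    finally show ?thesis .
  qed
  have ig: "g integrable_on {0..T}" using mb_integrable[OF mg gb] .
  have yint: "y s - y 0 = integral {0..s} g" if "s \<in> {0..T}" for s
    using hy[OF that] unfolding g_def by (simp add: integral_unique)
  define Ly where "Ly = K * Y + K"
  have Ly0: "0 \<le> Ly" using K0 Y by (simp add: Ly_def)
  have ylip: "\<bar>y s - y r\<bar> \<le> Ly * \<bar>s - r\<bar>" if "s \<in> {0..T}" "r \<in> {0..T}" for s r
  proof -
    have "y s - y r = integral {0..s} g - integral {0..r} g" using yint[OF that(1)] yint[OF that(2)] by simp
    then show ?thesis using Dbound'[OF ig that, of Ly] gb unfolding Ly_def by auto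
  qed
  define E where "E = (\<lambda>t. y t * A t - integral {0..t} (\<lambda>s. A s * q s))"
  have mAq: "(\<lambda>s. A s * q s) \<in> borel_measurable (lebesgue_on {0..T})" using mA mq by measurable
  have iAq: "(\<lambda>s. A s * q s) integrable_on {0..T}"
    by (rule mb_integrable[OF mAq, of "EA * K"]) (use Aabs bq in \<open>auto intro!: abs_mul_le\<close>)
  have mpy: "(\<lambda>s. p s * y s) \<in> borel_measurable (lebesgue_on {0..T})" using mp my by measurable
  have ipy: "(\<lambda>s. p s * y s) integrable_on {0..T}"
    by (rule mb_integrable[OF mpy, of "K * Y"]) (use bp Y K0 in \<open>auto intro!: abs_mul_le\<close>)
  define C where "C = EA * K * Ly + Y * EA * K^2 + EA * K^2"
  have quad: "\<bar>E s - E r\<bar> \<le> C * (s - r)^2" if s: "s \<in> {0..T}" and r: "r \<in> {0..T}" and sr: "\<bar>s - r\<bar> < 1 / (K + 1)" for s r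
  proof -
    define D where "D = (\<lambda>f::real\<Rightarrow>real. integral {0..s} f - integral {0..r} f)"
    define f1 where "f1 = (\<lambda>u. A s * (p u * y u) + (- (A s * y r)) * p u)"
    define f3 where "f3 = (\<lambda>u. A s * q u + (-1) * (A u * q u))"
    have gD: "D g = y s - y r" unfolding D_def using yint[OF s] yint[OF r] by simp
    have gsplit: "integral {0..x} g = 1 * integral {0..x} (\<lambda>u. p u * y u) + 1 * integral {0..x} q" if "x \<in> {0..T}" for x
      using int_lin2[OF ipy iq that, of 1 1] unfolding g_def by simp
    have f1x: "integral {0..x} f1 = A s * integral {0..x} (\<lambda>u. p u * y u) + (- (A s * y r)) * integral {0..x} p" if "x \<in> {0..T}" for x
      unfolding f1_def by (rule int_lin2[OF ipy ip that])
    have f3x: "integral {0..x} f3 = A s * integral {0..x} q + (-1) * integral {0..x} (\<lambda>u. A u * q u)" if "x \<in> {0..T}" for x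
      unfolding f3_def by (rule int_lin2[OF iq iAq that])
    have f1D: "D f1 = A s * D (\<lambda>u. p u * y u) - A s * y r * (P s - P r)"
      unfolding D_def P_def using f1x[OF s] f1x[OF r] by (simp add: algebra_simps)
    have f3D: "D f3 = A s * D q - D (\<lambda>u. A u * q u)"
      unfolding D_def using f3x[OF s] f3x[OF r] by (simp add: algebra_simps)
    have gD2: "D g = D (\<lambda>u. p u * y u) + D q" unfolding D_def using gsplit[OF s] gsplit[OF r] by simp
    have e1: "y s = y r + D (\<lambda>u. p u * y u) + D q" using gD gD2 by simp
    have e2: "A s * y s = A s * y r + A s * D (\<lambda>u. p u * y u) + A s * D q"
      unfolding e1 by (simp add: algebra_simps)
    have e3: "integral {0..s} (\<lambda>u. A u * q u) - integral {0..r} (\<lambda>u. A u * q u) = D (\<lambda>u. A u * q u)"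
      by (simp add: D_def)
    have ident: "E s - E r = D f1 + y r * (A s * (P s - P r) + A s - A r) + D f3"
    proof -
      have "E s - E r = A s * y s - y r * A r - D (\<lambda>u. A u * q u)"
        unfolding E_def using e3 by (simp add: algebra_simps)
      then show ?thesis using e2 f1D f3D by (simp add: algebra_simps)
    qed
    have sr1: "\<bar>s - r\<bar> * (K + 1) < 1" using sr K0 by (simp add: field_simps)
    have if1: "f1 integrable_on {0..T}" unfolding f1_def by (intro integrable_add integrable_on_mult_right ipy ip)
    have if3: "f3 integrable_on {0..T}" unfolding f3_def by (intro integrable_add integrable_on_mult_right iq iAq)
    have b1: "\<bar>D f1\<bar> \<le> (EA * K * (Ly * \<bar>s - r\<bar>)) * \<bar>s - r\<bar>"
      unfolding D_def
    proof (rule Dbound[OF if1 s r])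
      fix u assume u: "min s r \<le> u" "u \<le> max s r"
      then have u': "u \<in> {0..T}" using s r by auto
      have "\<bar>f1 u\<bar> = \<bar>A s\<bar> * \<bar>p u\<bar> * \<bar>y u - y r\<bar>" unfolding f1_def by (simp add: abs_mult[symmetric] algebra_simps)
      also have "\<dots> \<le> EA * K * (Ly * \<bar>s - r\<bar>)"
      proof (intro mult_mono)
        show "\<bar>A s\<bar> \<le> EA" using Ab[OF s] by simp
        show "\<bar>p u\<bar> \<le> K" using bp[OF u'] .
        have "\<bar>y u - y r\<bar> \<le> Ly * \<bar>u - r\<bar>" using ylip[OF u' r] .
        also have "\<dots> \<le> Ly * \<bar>s - r\<bar>" using u Ly0 by (intro mult_left_mono) (auto simp: min_def max_def split: if_splits)
        finally show "\<bar>y u - y r\<bar> \<le> Ly * \<bar>s - r\<bar>" .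
      qed (use K0 Ab[OF s] in auto)
      finally show "\<bar>f1 u\<bar> \<le> EA * K * (Ly * \<bar>s - r\<bar>)" .
    qed
    have b3: "\<bar>D f3\<bar> \<le> (EA * K * \<bar>s - r\<bar> * K) * \<bar>s - r\<bar>"
      unfolding D_def
    proof (rule Dbound[OF if3 s r])
      fix u assume u: "min s r \<le> u" "u \<le> max s r"
      then have u': "u \<in> {0..T}" using s r by auto
      have "\<bar>f3 u\<bar> = \<bar>A s - A u\<bar> * \<bar>q u\<bar>" unfolding f3_def by (simp add: abs_mult[symmetric] algebra_simps)
      also have "\<dots> \<le> (EA * K * \<bar>s - r\<bar>) * K"
      proof (intro mult_mono)
        have "\<bar>A s - A u\<bar> \<le> EA * K * \<bar>s - u\<bar>" using Alip[OF s u'] .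
        also have "\<dots> \<le> EA * K * \<bar>s - r\<bar>" using u K0 Ab[OF s]
          by (intro mult_left_mono) (auto simp: min_def max_def split: if_splits)
        finally show "\<bar>A s - A u\<bar> \<le> EA * K * \<bar>s - r\<bar>" .
      qed (use bq[OF u'] K0 Ab[OF s] in auto)
      finally show "\<bar>f3 u\<bar> \<le> EA * K * \<bar>s - r\<bar> * K" .
    qed
    define x where "x = P s - P r"
    have xb: "\<bar>x\<bar> \<le> K * \<bar>s - r\<bar>" unfolding x_def using Plip[OF s r] .
    have x1: "\<bar>x\<bar> \<le> 1"
    proof -
      have "K * \<bar>s - r\<bar> \<le> \<bar>s - r\<bar> * (K + 1)" using K0 by (simp add: algebra_simps)
      then show ?thesis using xb sr1 by linarith
    qed
    have Ar: "A r = A s * exp x" unfolding A_def x_def by (simp add: exp_add[symmetric])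
    have mid: "A s * (P s - P r) + A s - A r = - A s * (exp x - 1 - x)"
      unfolding Ar x_def[symmetric] by (simp add: algebra_simps)
    have b2: "\<bar>y r * (A s * (P s - P r) + A s - A r)\<bar> \<le> Y * (EA * (K * \<bar>s - r\<bar>)^2)"
    proof -
      have "\<bar>y r * (A s * (P s - P r) + A s - A r)\<bar> = \<bar>y r\<bar> * (\<bar>A s\<bar> * \<bar>exp x - 1 - x\<bar>)"
        unfolding mid by (simp add: abs_mult)
      also have "\<dots> \<le> Y * (EA * (K * \<bar>s - r\<bar>)^2)"
      proof (intro mult_mono)
        have "\<bar>exp x - 1 - x\<bar> \<le> x^2" using exp_quad[OF x1] .
        also have "\<dots> \<le> (K * \<bar>s - r\<bar>)^2" using power_mono[OF xb abs_ge_zero, of 2] by simp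
        finally show "\<bar>exp x - 1 - x\<bar> \<le> (K * \<bar>s - r\<bar>)^2" .
      qed (use Ab[OF s] Y(1)[OF r] Y(2) in auto)
      finally show ?thesis .
    qed
    have "\<bar>E s - E r\<bar> \<le> \<bar>D f1\<bar> + \<bar>y r * (A s * (P s - P r) + A s - A r)\<bar> + \<bar>D f3\<bar>"
      unfolding ident by linarith
    also have "\<dots> \<le> (EA * K * (Ly * \<bar>s - r\<bar>)) * \<bar>s - r\<bar> + Y * (EA * (K * \<bar>s - r\<bar>)^2) + (EA * K * \<bar>s - r\<bar> * K) * \<bar>s - r\<bar>"
      using b1 b2 b3 by linarith
    also have "\<dots> = C * (s - r)^2" unfolding C_def by (simp add: power2_eq_square algebra_simps)
    finally show ?thesis .
  qed
  have "E t = E 0"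
    by (rule const_by_quad[of "1 / (K + 1)" T E C]) (use quad K0 t in auto)
  moreover have "E 0 = y 0" unfolding E_def A_def P0 by simp
  ultimately show ?thesis unfolding E_def A_def P_def using Ab t
    by (simp add: algebra_simps)
qed




lemma ae_zero_of_integral:
  fixes f :: "real \<Rightarrow> real"
  assumes m: "f \<in> borel_measurable (lebesgue_on {a..b})"
    and bd: "\<And>x. x \<in> {a..b} \<Longrightarrow> \<bar>f x\<bar> \<le> B"
    and nn: "\<And>x. x \<in> {a..b} \<Longrightarrow> 0 \<le> f x"
    and z: "integral {a..b} f = 0"
  shows "AE x in lebesgue_on {a..b}. f x = 0"
proof -
  have ab: "f absolutely_integrable_on {a..b}"
    by (rule measurable_bounded_by_integrable_imp_absolutely_integrable[OF m, of "\<lambda>_. B"]) (use bd in auto)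
  then have int: "integrable (lebesgue_on {a..b}) f"
    by (simp add: integrable_restrict_space set_integrable_def)
  have "integral\<^sup>L (lebesgue_on {a..b}) f = 0"
    using lebesgue_integral_eq_integral[OF int] z by simp
  moreover have "AE x in lebesgue_on {a..b}. 0 \<le> f x"
    using nn by (intro AE_I2) auto
  ultimately show ?thesis using integral_nonneg_eq_0_iff_AE[OF int] by simp
qed

lemma ftc_real:
  fixes f f' :: "real \<Rightarrow> real"
  assumes "a \<le> b" "\<And>x. x \<in> {a..b} \<Longrightarrow> (f has_real_derivative f' x) (at x)"
  shows "(f' has_integral (f b - f a)) {a..b}"
proof (rule fundamental_theorem_of_calculus_interior_strong[of "{}"])
  show "continuous_on {a..b} f" using assms(2)
    by (meson DERIV_isCont continuous_at_imp_continuous_on)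
qed (use assms in \<open>auto simp: has_real_derivative_iff_has_vector_derivative\<close>)

lemma exp_integral:
  fixes c a b :: real
  assumes "c \<noteq> 0" "a \<le> b"
  shows "((\<lambda>s. exp (c * s)) has_integral ((exp (c * b) - exp (c * a)) / c)) {a..b}"
proof -
  have "((\<lambda>s. exp (c * s)) has_integral (exp (c * b) / c - exp (c * a) / c)) {a..b}"
    by (rule ftc_real[OF assms(2)]) (use assms(1) in \<open>auto intro!: derivative_eq_intros\<close>)
  then show ?thesis by (simp add: diff_divide_distrib)
qed

lemma traj_formulas:
  fixes T M :: real and a1 a2 x1 x2 :: "real \<Rightarrow> real"
  assumes T: "0 < T" and adm: "admissible T M a1 a2" and tr: "is_traj T a1 a2 x1 x2"
    and t: "t \<in> {0..T}"
  shows "(x1 t + x2 t) / 2 = (x1 0 + x2 0) / 2 * exp (- integral {0..t} (\<lambda>s. a1 s + a2 s) / 2)"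
    and "(x1 t - x2 t) * exp t = (x1 0 - x2 0) + integral {0..t} (\<lambda>s. exp s * (- (a1 s - a2 s) * ((x1 s + x2 s) / 2)))"
    and "(x1 t + x2 t) / 2 * exp t = (x1 0 + x2 0) / 2 + integral {0..t} (\<lambda>s. exp s * ((x1 s + x2 s) / 2 * (1 - (a1 s + a2 s) / 2)))"
proof -
  define b where "b = (\<lambda>t. (x1 t + x2 t) / 2)"
  define d where "d = (\<lambda>t. x1 t - x2 t)"
  have m1: "a1 \<in> borel_measurable (lebesgue_on {0..T})" and m2: "a2 \<in> borel_measurable (lebesgue_on {0..T})"
    and ab: "\<And>t. t \<in> {0..T} \<Longrightarrow> 0 \<le> a1 t \<and> a1 t \<le> 1 \<and> 0 \<le> a2 t \<and> a2 t \<le> 1"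
    using adm unfolding admissible_def by auto
  have c1: "continuous_on {0..T} x1" and c2: "continuous_on {0..T} x2"
    and h1: "\<And>t. t \<in> {0..T} \<Longrightarrow> ((\<lambda>s. - x1 s + (1 - a1 s) * ((x1 s + x2 s) / 2)) has_integral (x1 t - x1 0)) {0..t}"
    and h2: "\<And>t. t \<in> {0..T} \<Longrightarrow> ((\<lambda>s. - x2 s + (1 - a2 s) * ((x1 s + x2 s) / 2)) has_integral (x2 t - x2 0)) {0..t}"
    using tr unfolding is_traj_def by auto
  have cb: "continuous_on {0..T} b" unfolding b_def by (intro continuous_intros c1 c2) auto
  have cd: "continuous_on {0..T} d" unfolding d_def by (intro continuous_intros c1 c2)
  have mb: "b \<in> borel_measurable (lebesgue_on {0..T})"
    by (rule continuous_imp_measurable_on_sets_lebesgue[OF cb]) auto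
  obtain Bb where Bb: "\<And>t. t \<in> {0..T} \<Longrightarrow> \<bar>b t\<bar> \<le> Bb" "0 \<le> Bb"
    using continuous_on_compact_bound[OF compact_Icc cb] by (metis real_norm_def)
  have hb: "((\<lambda>s. ((-1/2) * (a1 s + a2 s)) * b s + 0) has_integral (b t - b 0)) {0..t}" if "t \<in> {0..T}" for t
  proof -
    have "((\<lambda>s. (- x1 s + (1 - a1 s) * ((x1 s + x2 s) / 2) + (- x2 s + (1 - a2 s) * ((x1 s + x2 s) / 2))) / 2)
       has_integral ((x1 t - x1 0) + (x2 t - x2 0)) / 2) {0..t}"
      using has_integral_add[OF h1[OF that] h2[OF that]] has_integral_divide by blast
    moreover have fe: "(\<lambda>s. (- x1 s + (1 - a1 s) * ((x1 s + x2 s) / 2) + (- x2 s + (1 - a2 s) * ((x1 s + x2 s) / 2))) / 2)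
        = (\<lambda>s. ((-1/2) * (a1 s + a2 s)) * b s + 0)"
      by (auto simp: b_def field_simps)
    moreover have ve: "((x1 t - x1 0) + (x2 t - x2 0)) / 2 = b t - b 0" by (simp add: b_def field_simps)
    ultimately show ?thesis by metis
  qed
  have hd: "((\<lambda>s. (-1) * d s + (- (a1 s - a2 s) * b s)) has_integral (d t - d 0)) {0..t}" if "t \<in> {0..T}" for t
  proof -
    have "((\<lambda>s. (- x1 s + (1 - a1 s) * ((x1 s + x2 s) / 2)) - (- x2 s + (1 - a2 s) * ((x1 s + x2 s) / 2)))
       has_integral ((x1 t - x1 0) - (x2 t - x2 0))) {0..t}"
      using has_integral_diff[OF h1[OF that] h2[OF that]] by blast
    moreover have "(\<lambda>s. (- x1 s + (1 - a1 s) * ((x1 s + x2 s) / 2)) - (- x2 s + (1 - a2 s) * ((x1 s + x2 s) / 2)))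
        = (\<lambda>s. (-1) * d s + (- (a1 s - a2 s) * b s))"
      by (auto simp: b_def d_def field_simps)
    moreover have ve: "((x1 t - x1 0) - (x2 t - x2 0)) = d t - d 0" by (simp add: d_def)
    ultimately show ?thesis by metis
  qed
  have hb2: "((\<lambda>s. (-1) * b s + (b s * (1 - (a1 s + a2 s) / 2))) has_integral (b t - b 0)) {0..t}" if "t \<in> {0..T}" for t
  proof -
    have "(\<lambda>s. ((-1/2) * (a1 s + a2 s)) * b s + 0) = (\<lambda>s. (-1) * b s + (b s * (1 - (a1 s + a2 s) / 2)))"
      by (auto simp: field_simps)
    then show ?thesis using hb[OF that] by simp
  qed
  have T0: "0 \<le> T" using T by simp
  have mp1: "(\<lambda>s. (-1/2) * (a1 s + a2 s)) \<in> borel_measurable (lebesgue_on {0..T})" using m1 m2 by measurable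
  have L1: "b t * exp (- integral {0..t} (\<lambda>s. (-1/2) * (a1 s + a2 s))) = b 0 + integral {0..t} (\<lambda>s. exp (- integral {0..s} (\<lambda>s. (-1/2) * (a1 s + a2 s))) * 0)"
  proof (rule lin_ode[OF T0 cb mp1 _ _ _ hb t, of 1])
    fix s assume s: "s \<in> {0..T}"
    show "\<bar>(-1/2) * (a1 s + a2 s)\<bar> \<le> 1" using ab[OF s] by (simp add: abs_le_iff)
  qed auto
  then show "(x1 t + x2 t) / 2 = (x1 0 + x2 0) / 2 * exp (- integral {0..t} (\<lambda>s. a1 s + a2 s) / 2)"
    unfolding b_def by (simp add: exp_minus field_simps)
  have mq: "(\<lambda>s. - (a1 s - a2 s) * b s) \<in> borel_measurable (lebesgue_on {0..T})" using m1 m2 mb by measurable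
  have L2: "d t * exp (- integral {0..t} (\<lambda>s. -1)) = d 0 + integral {0..t} (\<lambda>s. exp (- integral {0..s} (\<lambda>s. -1)) * (- (a1 s - a2 s) * b s))"
  proof (rule lin_ode[OF T0 cd _ mq _ _ hd t, of "1 + Bb"])
    fix s assume s: "s \<in> {0..T}"
    have "\<bar>- (a1 s - a2 s) * b s\<bar> \<le> 1 * Bb"
      by (rule abs_mul_le) (use ab[OF s] Bb(1)[OF s] in auto)
    then show "\<bar>- (a1 s - a2 s) * b s\<bar> \<le> 1 + Bb" by simp
  qed (use Bb in auto)
  have eint: "integral {0..s} (\<lambda>s. -1) = - s" if "0 \<le> s" for s :: real using that by simp
  have "integral {0..t} (\<lambda>s. exp (- integral {0..s} (\<lambda>s. -1)) * (- (a1 s - a2 s) * b s))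
      = integral {0..t} (\<lambda>s. exp s * (- (a1 s - a2 s) * b s))"
    by (rule integral_cong) (auto simp: eint)
  then show "(x1 t - x2 t) * exp t = (x1 0 - x2 0) + integral {0..t} (\<lambda>s. exp s * (- (a1 s - a2 s) * ((x1 s + x2 s) / 2)))"
    using L2 t unfolding d_def b_def by (simp add: eint)
  have mq3: "(\<lambda>s. b s * (1 - (a1 s + a2 s) / 2)) \<in> borel_measurable (lebesgue_on {0..T})" using m1 m2 mb by measurable
  have L3: "b t * exp (- integral {0..t} (\<lambda>s. -1)) = b 0 + integral {0..t} (\<lambda>s. exp (- integral {0..s} (\<lambda>s. -1)) * (b s * (1 - (a1 s + a2 s) / 2)))"
  proof (rule lin_ode[OF T0 cb _ mq3 _ _ hb2 t, of "1 + Bb"])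
    fix s assume s: "s \<in> {0..T}"
    have "\<bar>b s * (1 - (a1 s + a2 s) / 2)\<bar> \<le> Bb * 1"
      by (rule abs_mul_le) (use ab[OF s] Bb(1)[OF s] in auto)
    then show "\<bar>b s * (1 - (a1 s + a2 s) / 2)\<bar> \<le> 1 + Bb" by simp
  qed (use Bb in auto)
  have "integral {0..t} (\<lambda>s. exp (- integral {0..s} (\<lambda>s. -1)) * (b s * (1 - (a1 s + a2 s) / 2)))
      = integral {0..t} (\<lambda>s. exp s * (b s * (1 - (a1 s + a2 s) / 2)))"
    by (rule integral_cong) (auto simp: eint)
  then show "(x1 t + x2 t) / 2 * exp t = (x1 0 + x2 0) / 2 + integral {0..t} (\<lambda>s. exp s * ((x1 s + x2 s) / 2 * (1 - (a1 s + a2 s) / 2)))"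
    using L3 t unfolding b_def by (simp add: eint)
qed




lemma adm_facts:
  assumes adm: "admissible T M a1 a2"
  shows "(\<lambda>s. a1 s + a2 s) \<in> borel_measurable (lebesgue_on {0..T})"
    and "(\<lambda>s. a1 s + a2 s) integrable_on {0..T}"
    and "\<And>s. s \<in> {0..T} \<Longrightarrow> 0 \<le> a1 s \<and> a1 s \<le> 1 \<and> 0 \<le> a2 s \<and> a2 s \<le> 1 \<and> a1 s + a2 s \<le> M"
proof -
  have m1: "a1 \<in> borel_measurable (lebesgue_on {0..T})" and m2: "a2 \<in> borel_measurable (lebesgue_on {0..T})"
    and ab: "\<And>t. t \<in> {0..T} \<Longrightarrow> 0 \<le> a1 t \<and> a1 t \<le> 1 \<and> 0 \<le> a2 t \<and> a2 t \<le> 1 \<and> a1 t + a2 t \<le> M"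
    using adm unfolding admissible_def by auto
  show m: "(\<lambda>s. a1 s + a2 s) \<in> borel_measurable (lebesgue_on {0..T})" using m1 m2 by measurable
  show "(\<lambda>s. a1 s + a2 s) integrable_on {0..T}"
  proof (rule mb_integrable[OF m, of 2])
    fix x assume "x \<in> {0..T}" then show "\<bar>a1 x + a2 x\<bar> \<le> 2" using ab[of x] by auto
  qed
  show "\<And>s. s \<in> {0..T} \<Longrightarrow> 0 \<le> a1 s \<and> a1 s \<le> 1 \<and> 0 \<le> a2 s \<and> a2 s \<le> 1 \<and> a1 s + a2 s \<le> M"
    by (rule ab)
qed

lemma F_diff:
  assumes adm: "admissible T M a1 a2" and st: "0 \<le> s" "s \<le> t" "t \<le> T"
  shows "integral {0..t} (\<lambda>s. a1 s + a2 s) - integral {0..s} (\<lambda>s. a1 s + a2 s) = integral {s..t} (\<lambda>s. a1 s + a2 s)"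
    and "0 \<le> integral {s..t} (\<lambda>s. a1 s + a2 s)"
    and "integral {s..t} (\<lambda>s. a1 s + a2 s) \<le> M * (t - s)"
proof -
  note af = adm_facts[OF adm]
  have it: "(\<lambda>s. a1 s + a2 s) integrable_on {0..t}" using af(2) integrable_on_subinterval st by fastforce
  have ist: "(\<lambda>s. a1 s + a2 s) integrable_on {s..t}" using af(2) integrable_on_subinterval st by fastforce
  show "integral {0..t} (\<lambda>s. a1 s + a2 s) - integral {0..s} (\<lambda>s. a1 s + a2 s) = integral {s..t} (\<lambda>s. a1 s + a2 s)"
    using Henstock_Kurzweil_Integration.integral_combine[OF st(1) st(2) it] by simp
  show "0 \<le> integral {s..t} (\<lambda>s. a1 s + a2 s)"
    by (rule integral_nonneg[OF ist]) (use af(3) st in force)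
  have "integral {s..t} (\<lambda>s. a1 s + a2 s) \<le> integral {s..t} (\<lambda>_. M)"
    by (rule integral_le[OF ist]) (use af(3) st in force)+
  then show "integral {s..t} (\<lambda>s. a1 s + a2 s) \<le> M * (t - s)" using st by (simp add: mult.commute)
qed

lemma F_nonneg:
  assumes adm: "admissible T M a1 a2" and "0 \<le> s" "s \<le> T"
  shows "0 \<le> integral {0..s} (\<lambda>s. a1 s + a2 s)"
  using F_diff(2)[OF adm order_refl assms(2) assms(3)] by simp

lemma lower:
  fixes T M :: real and a1 a2 x1 x2 :: "real \<Rightarrow> real"
  assumes T: "0 < T" and M: "0 < M" "M < 1" and adm: "admissible T M a1 a2" and tr: "is_traj T a1 a2 x1 x2"
    and b0pos: "(x1 0 + x2 0) / 2 > 0"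
  defines "b0 \<equiv> (x1 0 + x2 0) / 2" and "d0 \<equiv> x1 0 - x2 0" and "k \<equiv> 2 * M / (2 - M)"
    and "ts \<equiv> T - integral {0..T} (\<lambda>s. a1 s + a2 s) / M"
  shows "0 \<le> ts" "ts \<le> T"
    "(x1 T + x2 T) / 2 = b0 * exp (- M * (T - ts) / 2)"
    "x1 T - x2 T \<ge> exp (- T) * (d0 - b0 * k * (exp (T - M * (T - ts) / 2) - exp ts))"
    "x1 T - x2 T = exp (- T) * (d0 - b0 * k * (exp (T - M * (T - ts) / 2) - exp ts))
       \<Longrightarrow> integral {0..ts} (\<lambda>s. a1 s + a2 s) = 0 \<and> (AE t in lebesgue_on {0..T}. a2 t = 0)"
proof -
  define \<sigma> where "\<sigma> = (\<lambda>s. a1 s + a2 s)"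
  define F where "F = (\<lambda>t. integral {0..t} \<sigma>)"
  define b where "b = (\<lambda>t. (x1 t + x2 t) / 2)"
  define c where "c = (\<lambda>s. a1 s - a2 s)"
  note af = adm_facts[OF adm]
  have b0p: "0 < b0" using b0pos unfolding b0_def .
  have m1: "a1 \<in> borel_measurable (lebesgue_on {0..T})" and m2: "a2 \<in> borel_measurable (lebesgue_on {0..T})"
    using adm unfolding admissible_def by auto
  have ab: "\<And>s. s \<in> {0..T} \<Longrightarrow> 0 \<le> a1 s \<and> a1 s \<le> 1 \<and> 0 \<le> a2 s \<and> a2 s \<le> 1 \<and> a1 s + a2 s \<le> M"
    by (rule af(3))
  have c1: "continuous_on {0..T} x1" and c2: "continuous_on {0..T} x2" using tr unfolding is_traj_def by auto
  have cb: "continuous_on {0..T} b" unfolding b_def by (intro continuous_intros c1 c2) auto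
  have mb: "b \<in> borel_measurable (lebesgue_on {0..T})"
    by (rule continuous_imp_measurable_on_sets_lebesgue[OF cb]) auto
  have T0: "0 \<le> T" using T by simp
  have Tin: "T \<in> {0..T}" using T by simp
  have FT0: "0 \<le> F T" unfolding F_def \<sigma>_def using F_nonneg[OF adm T0 order_refl] .
  have FTM: "F T \<le> M * T" unfolding F_def \<sigma>_def using F_diff[OF adm order_refl T0 order_refl] by simp
  show ts0: "0 \<le> ts" unfolding ts_def using FTM M unfolding F_def \<sigma>_def by (simp add: field_simps)
  show tsT: "ts \<le> T" unfolding ts_def using FT0 M unfolding F_def \<sigma>_def by (simp add: field_simps)
  have FTts: "F T = M * (T - ts)" unfolding ts_def F_def \<sigma>_def using M by (simp add: field_simps)
  have bform: "b s = b0 * exp (- F s / 2)" if "s \<in> {0..T}" for s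
    using traj_formulas(1)[OF T adm tr that] unfolding b_def b0_def F_def \<sigma>_def .
  show bT: "(x1 T + x2 T) / 2 = b0 * exp (- M * (T - ts) / 2)"
    using bform[OF Tin] unfolding b_def FTts by simp
  have bpos: "0 < b s" if "s \<in> {0..T}" for s using bform[OF that] b0p by simp
  have ble: "b s \<le> b0" if "s \<in> {0..T}" for s
  proof -
    have "0 \<le> F s" unfolding F_def \<sigma>_def using F_nonneg[OF adm] that by auto
    then show ?thesis using bform[OF that] b0p by (simp add: mult_le_cancel_left1)
  qed
  have ble2: "b s \<le> b0 * exp (M * (ts - s) / 2)" if "s \<in> {ts..T}" for s
  proof -
    have s: "s \<in> {0..T}" using that ts0 by auto
    have "F T - F s \<le> M * (T - s)"
      using F_diff(1,3)[OF adm _ _ order_refl, of s] that ts0 unfolding F_def \<sigma>_def by auto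
    then have "- F s / 2 \<le> M * (ts - s) / 2" using FTts by (simp add: algebra_simps)
    then show ?thesis using bform[OF s] b0p by simp
  qed
  obtain Bb where Bb: "\<And>t. t \<in> {0..T} \<Longrightarrow> \<bar>b t\<bar> \<le> Bb" "0 \<le> Bb"
    using continuous_on_compact_bound[OF compact_Icc cb] by (metis real_norm_def)
  have ceT: "continuous_on {0..T} exp" by (intro continuous_intros)
  have me: "exp \<in> borel_measurable (lebesgue_on {0..T})"
    by (rule continuous_imp_measurable_on_sets_lebesgue[OF ceT]) auto
  have ebd: "\<bar>exp s\<bar> \<le> exp T" if "s \<in> {0..T}" for s using that by auto
  have iW: "(\<lambda>s. exp s * (c s * b s)) integrable_on {0..T}"
  proof (rule mb_integrable)
    show "(\<lambda>s. exp s * (c s * b s)) \<in> borel_measurable (lebesgue_on {0..T})" unfolding c_def using me m1 m2 mb by measurable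
    fix s assume s: "s \<in> {0..T}"
    show "\<bar>exp s * (c s * b s)\<bar> \<le> exp T * (1 * Bb)"
      by (intro abs_mul_le ebd s) (use ab[OF s] Bb(1)[OF s] in \<open>auto simp: c_def\<close>)
  qed
  have iWs: "(\<lambda>s. exp s * (\<sigma> s * b s)) integrable_on {0..T}"
  proof (rule mb_integrable)
    show "(\<lambda>s. exp s * (\<sigma> s * b s)) \<in> borel_measurable (lebesgue_on {0..T})" unfolding \<sigma>_def using me m1 m2 mb by measurable
    fix s assume s: "s \<in> {0..T}"
    show "\<bar>exp s * (\<sigma> s * b s)\<bar> \<le> exp T * (2 * Bb)"
      by (intro abs_mul_le ebd s) (use ab[OF s] Bb(1)[OF s] in \<open>auto simp: \<sigma>_def\<close>)
  qed
  have iJ: "(\<lambda>s. exp s * b s) integrable_on {0..T}"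
    by (rule integrable_continuous_interval) (intro continuous_intros cb)
  define W where "W = integral {0..T} (\<lambda>s. exp s * (c s * b s))"
  define Ws where "Ws = integral {0..T} (\<lambda>s. exp s * (\<sigma> s * b s))"
  define J where "J = integral {0..T} (\<lambda>s. exp s * b s)"
  have dT: "(x1 T - x2 T) * exp T = d0 - W"
  proof -
    have "integral {0..T} (\<lambda>s. exp s * (- (a1 s - a2 s) * ((x1 s + x2 s) / 2))) = integral {0..T} (\<lambda>s. (-1) * (exp s * (c s * b s)))"
      by (rule integral_cong) (simp add: c_def b_def algebra_simps)
    then show ?thesis using traj_formulas(2)[OF T adm tr Tin] unfolding W_def d0_def by simp
  qed
  have bTe: "b T * exp T = b0 + J - Ws / 2"
  proof -
    have "integral {0..T} (\<lambda>s. exp s * ((x1 s + x2 s) / 2 * (1 - (a1 s + a2 s) / 2)))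
        = integral {0..T} (\<lambda>s. 1 * (exp s * b s) + (-1/2) * (exp s * (\<sigma> s * b s)))"
      by (rule integral_cong) (simp add: \<sigma>_def b_def field_simps)
    also have "\<dots> = 1 * J + (-1/2) * Ws" unfolding J_def Ws_def by (rule int_lin2[OF iJ iWs Tin])
    also have "\<dots> = J - Ws / 2" by simp
    finally show ?thesis using traj_formulas(3)[OF T adm tr Tin] unfolding b_def b0_def by simp
  qed
  have WWs: "W \<le> Ws" unfolding W_def Ws_def
  proof (rule integral_le[OF iW iWs])
    fix s assume s: "s \<in> {0..T}"
    show "exp s * (c s * b s) \<le> exp s * (\<sigma> s * b s)"
      using ab[OF s] bpos[OF s] by (auto simp: c_def \<sigma>_def intro!: mult_left_mono mult_right_mono)
  qed
  define J1 where "J1 = integral {0..ts} (\<lambda>s. exp s * b s)"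
  define J2 where "J2 = integral {ts..T} (\<lambda>s. exp s * b s)"
  have JJ: "J = J1 + J2" unfolding J_def J1_def J2_def
    using Henstock_Kurzweil_Integration.integral_combine[OF ts0 tsT iJ] by simp
  have iJ1: "(\<lambda>s. exp s * b s) integrable_on {0..ts}" using iJ integrable_on_subinterval tsT by fastforce
  have iJ2: "(\<lambda>s. exp s * b s) integrable_on {ts..T}" using iJ integrable_on_subinterval ts0 by fastforce
  have e1: "((\<lambda>s. b0 * exp s) has_integral (b0 * (exp ts - 1))) {0..ts}"
    using has_integral_mult_right[OF exp_integral[of 1 0 ts]] ts0 by simp
  define X where "X = exp (T - M * (T - ts) / 2)"
  define Y where "Y = exp ts"
  have e2: "((\<lambda>s. b0 * exp (M * ts / 2) * exp ((1 - M / 2) * s)) has_integral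
      (b0 * exp (M * ts / 2) * ((exp ((1 - M / 2) * T) - exp ((1 - M / 2) * ts)) / (1 - M / 2)))) {ts..T}"
    by (rule has_integral_mult_right[OF exp_integral]) (use M tsT in auto)
  have XX: "exp (M * ts / 2) * exp ((1 - M / 2) * T) = X" unfolding X_def by (simp add: exp_add[symmetric] field_simps)
  have YY: "exp (M * ts / 2) * exp ((1 - M / 2) * ts) = Y" unfolding Y_def by (simp add: exp_add[symmetric] algebra_simps)
  define J2m where "J2m = b0 * ((X - Y) / (1 - M / 2))"
  have e2': "((\<lambda>s. b0 * exp (M * ts / 2) * exp ((1 - M / 2) * s)) has_integral J2m) {ts..T}"
    using e2 unfolding J2m_def by (simp add: XX[symmetric] YY[symmetric] algebra_simps diff_divide_distrib)
  have J1le: "J1 \<le> b0 * (exp ts - 1)" unfolding J1_def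
  proof (rule has_integral_le[OF integrable_integral[OF iJ1] e1])
    fix s assume s: "s \<in> {0..ts}"
    then have "s \<in> {0..T}" using tsT by auto
    then show "exp s * b s \<le> b0 * exp s" using ble by (simp add: mult.commute)
  qed
  have J2le: "J2 \<le> J2m" unfolding J2_def
  proof (rule has_integral_le[OF integrable_integral[OF iJ2] e2'])
    fix s assume s: "s \<in> {ts..T}"
    have "exp s * b s \<le> exp s * (b0 * exp (M * (ts - s) / 2))" using ble2[OF s] by simp
    also have "\<dots> = b0 * exp (M * ts / 2) * exp ((1 - M / 2) * s)"
      by (simp add: exp_add[symmetric] field_simps)
    finally show "exp s * b s \<le> b0 * exp (M * ts / 2) * exp ((1 - M / 2) * s)" .
  qed
  have bTX: "b T * exp T = b0 * X"
  proof -
    have "b T = b0 * exp (- M * (T - ts) / 2)" using bT unfolding b_def .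
    then have "b T * exp T = b0 * (exp (- M * (T - ts) / 2) * exp T)" by simp
    also have "\<dots> = b0 * exp (- M * (T - ts) / 2 + T)" by (simp only: exp_add)
    also have "- M * (T - ts) / 2 + T = T - M * (T - ts) / 2" by simp
    finally show ?thesis unfolding X_def .
  qed
  have key: "2 * (b0 + b0 * (exp ts - 1) + J2m - b0 * X) = b0 * k * (X - Y)"
    unfolding J2m_def k_def Y_def using M by (simp add: field_simps)
  have Ws_eq: "Ws = 2 * (b0 + J - b T * exp T)" using bTe by simp
  have main: "(x1 T - x2 T) * exp T \<ge> d0 - b0 * k * (X - Y)"
  proof -
    have "Ws = 2 * (b0 + J1 + J2 - b0 * X)" using Ws_eq JJ bTX by simp
    also have "\<dots> \<le> 2 * (b0 + b0 * (exp ts - 1) + J2m - b0 * X)" using J1le J2le by simp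
    also have "\<dots> = b0 * k * (X - Y)" by (rule key)
    finally have "Ws \<le> b0 * k * (X - Y)" .
    then show ?thesis using dT WWs by linarith
  qed
  show "x1 T - x2 T \<ge> exp (- T) * (d0 - b0 * k * (exp (T - M * (T - ts) / 2) - exp ts))"
    using main unfolding X_def[symmetric] Y_def[symmetric]
    by (simp add: exp_minus field_simps)
  assume eq: "x1 T - x2 T = exp (- T) * (d0 - b0 * k * (exp (T - M * (T - ts) / 2) - exp ts))"
  then have eq': "(x1 T - x2 T) * exp T = d0 - b0 * k * (X - Y)"
    unfolding X_def Y_def by (simp add: exp_minus field_simps)
  have WsJ: "Ws = 2 * (b0 + J1 + J2 - b0 * X)" using Ws_eq JJ bTX by simp
  have WR: "W = b0 * k * (X - Y)" using eq' dT by simp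
  define Q where "Q = b0 * (exp ts - 1)"
  define R where "R = b0 * k * (X - Y)"
  define Z where "Z = b0 * X"
  have key': "2 * (b0 + Q + J2m - Z) = R" using key unfolding Q_def R_def Z_def .
  have WsJ': "Ws = 2 * (b0 + J1 + J2 - Z)" using WsJ unfolding Z_def .
  have J1le': "J1 \<le> Q" using J1le unfolding Q_def .
  have WR': "W = R" using WR unfolding R_def .
  have WeqWs: "W = Ws" using WR' WWs WsJ' J1le' J2le key' by argo
  have J1eq: "J1 = b0 * (exp ts - 1)" using WR' WWs WsJ' J1le' J2le key' unfolding Q_def[symmetric] by argo
  show "integral {0..ts} (\<lambda>s. a1 s + a2 s) = 0 \<and> (AE t in lebesgue_on {0..T}. a2 t = 0)"
  proof
    show "integral {0..ts} (\<lambda>s. a1 s + a2 s) = 0"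
    proof (cases "ts = 0")
      case True then show ?thesis by simp
    next
      case False
      then have tsp: "0 < ts" using ts0 by simp
      have cc: "continuous_on {0..ts} (\<lambda>s. b0 * exp s - exp s * b s)"
        by (intro continuous_intros continuous_on_subset[OF cb]) (use tsT in auto)
      have "integral {0..ts} (\<lambda>s. b0 * exp s - exp s * b s) = b0 * (exp ts - 1) - J1"
        unfolding J1_def using Henstock_Kurzweil_Integration.integral_diff[OF has_integral_integrable[OF e1] iJ1] integral_unique[OF e1] by simp
      then have "integral {0..ts} (\<lambda>s. b0 * exp s - exp s * b s) = 0" using J1eq by simp
      then have "\<forall>s\<in>{0..ts}. b0 * exp s - exp s * b s = 0"
        using integral_eq_0_iff[OF cc tsp] ble tsT by (auto simp: mult.commute)
      then have "b0 * exp ts - exp ts * b ts = 0" using ts0 by auto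
      then have "b ts = b0" by simp
      then have "exp (- F ts / 2) = 1" using bform[of ts] ts0 tsT b0p by auto
      then show ?thesis unfolding F_def \<sigma>_def by simp
    qed
    have mz: "(\<lambda>s. exp s * (2 * a2 s * b s)) \<in> borel_measurable (lebesgue_on {0..T})" using me m2 mb by measurable
    have "integral {0..T} (\<lambda>s. exp s * (2 * a2 s * b s)) = integral {0..T} (\<lambda>s. exp s * (\<sigma> s * b s) - exp s * (c s * b s))"
      by (rule integral_cong) (simp add: \<sigma>_def c_def algebra_simps)
    also have "\<dots> = Ws - W" unfolding Ws_def W_def by (rule Henstock_Kurzweil_Integration.integral_diff[OF iWs iW])
    finally have z: "integral {0..T} (\<lambda>s. exp s * (2 * a2 s * b s)) = 0" using WeqWs by simp
    have "AE s in lebesgue_on {0..T}. exp s * (2 * a2 s * b s) = 0"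
    proof (rule ae_zero_of_integral[OF mz _ _ z])
      fix s assume s: "s \<in> {0..T}"
      show "\<bar>exp s * (2 * a2 s * b s)\<bar> \<le> exp T * (2 * Bb)"
        by (intro abs_mul_le ebd s) (use ab[OF s] Bb(1)[OF s] in \<open>auto simp: abs_mult intro: mult_mono\<close>)
      show "0 \<le> exp s * (2 * a2 s * b s)" using ab[OF s] bpos[OF s] by simp
    qed
    moreover have "AE s in lebesgue_on {0..T}. exp s * (2 * a2 s * b s) = 0 \<longrightarrow> a2 s = 0"
    proof (rule AE_I2)
      fix s assume "s \<in> space (lebesgue_on {0..T})"
      then have "s \<in> {0..T}" by simp
      then have "0 < b s" by (rule bpos)
      then show "exp s * (2 * a2 s * b s) = 0 \<longrightarrow> a2 s = 0" by simp
    qed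
    ultimately show "AE t in lebesgue_on {0..T}. a2 t = 0" by eventually_elim auto
  qed
qed




lemma meas_step:
  fixes ts c :: real
  shows "(\<lambda>t::real. if t < ts then 0 else c) \<in> borel_measurable (lebesgue_on S)"
proof -
  have "(\<lambda>t::real. if t < ts then 0 else c) \<in> borel_measurable lborel" by simp
  then show ?thesis by (intro measurable_restrict_space1 measurable_completion)
qed

lemma alg1:
  fixes cc M lam b0 E e C :: real
  assumes h: "cc * M = 2*cc - 2*lam*b0*M"
  shows "b0*(E*(-M/2)) + (-e*C - cc*(E*(-M/2)))/2 = -(b0*E + (e*C - cc*E)/2) + (1 - M*(1+lam)/2)*((b0*E + (e*C - cc*E)/2 + (b0*E - (e*C - cc*E)/2))/2)"
proof -
  have "b0*(E*(-M/2)) + (-e*C - cc*(E*(-M/2)))/2 - (-(b0*E + (e*C - cc*E)/2) + (1 - M*(1+lam)/2)*((b0*E + (e*C - cc*E)/2 + (b0*E - (e*C - cc*E)/2))/2))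
     = (cc * M - (2*cc - 2*lam*b0*M)) * E / 4" by (simp add: algebra_simps divide_simps)
  then show ?thesis using h by simp
qed

lemma alg2:
  fixes cc M lam b0 E e C :: real
  assumes h: "cc * M = 2*cc - 2*lam*b0*M"
  shows "b0*(E*(-M/2)) - (-e*C - cc*(E*(-M/2)))/2 = -(b0*E - (e*C - cc*E)/2) + (1 - M*(1-lam)/2)*((b0*E + (e*C - cc*E)/2 + (b0*E - (e*C - cc*E)/2))/2)"
proof -
  have "b0*(E*(-M/2)) - (-e*C - cc*(E*(-M/2)))/2 - (-(b0*E - (e*C - cc*E)/2) + (1 - M*(1-lam)/2)*((b0*E + (e*C - cc*E)/2 + (b0*E - (e*C - cc*E)/2))/2))
     = - (cc * M - (2*cc - 2*lam*b0*M)) * E / 4" by (simp add: algebra_simps divide_simps)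
  then show ?thesis using h by simp
qed

lemma competitor:
  fixes T M lam ts b0 d0 :: real
  assumes T: "0 < T" and M: "0 < M" "M < 1" and lam: "0 \<le> lam" "lam \<le> 1" and ts: "0 \<le> ts" "ts \<le> T"
  shows "\<exists>a1 a2 y1 y2. admissible T M a1 a2 \<and> is_traj T a1 a2 y1 y2 \<and>
     y1 0 = b0 + d0 / 2 \<and> y2 0 = b0 - d0 / 2 \<and>
     cost T y1 y2 = (b0 * exp (- M * (T - ts) / 2))^2
        + (exp (- T) * (d0 - lam * b0 * (2 * M / (2 - M)) * (exp (T - M * (T - ts) / 2) - exp ts)))^2 / 4"
proof -
  define k where "k = 2 * M / (2 - M)"
  define cc where "cc = lam * b0 * k"
  define a1 where "a1 = (\<lambda>t::real. if t < ts then 0 else M * (1 + lam) / 2)"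
  define a2 where "a2 = (\<lambda>t::real. if t < ts then 0 else M * (1 - lam) / 2)"
  define bb where "bb = (\<lambda>s. b0 * exp (- M * max 0 (s - ts) / 2))"
  define dd where "dd = (\<lambda>s. exp (- s) * (d0 + cc * exp (min s ts)) - cc * exp (- M * max 0 (s - ts) / 2))"
  define y1 where "y1 = (\<lambda>s. bb s + dd s / 2)"
  define y2 where "y2 = (\<lambda>s. bb s - dd s / 2)"
  have kM: "k * (1 - M / 2) = M" unfolding k_def using M by (simp add: field_simps)
  have adm: "admissible T M a1 a2"
    unfolding admissible_def
  proof (intro conjI ballI)
    show "a1 \<in> borel_measurable (lebesgue_on {0..T})" unfolding a1_def by (rule meas_step)
    show "a2 \<in> borel_measurable (lebesgue_on {0..T})" unfolding a2_def by (rule meas_step)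
    fix t assume "t \<in> {0..T}"
    have Ml1: "M * lam \<le> M" using mult_left_mono[of lam 1 M] M lam by simp
    have Ml0: "0 \<le> M * lam" using M lam by simp
    have e1: "M * (1 + lam) / 2 = (M + M * lam) / 2" "M * (1 - lam) / 2 = (M - M * lam) / 2" by (simp_all add: algebra_simps)
    have "M * (1 + lam) / 2 \<le> 1" unfolding e1 using M Ml0 Ml1 by argo
    moreover have "0 \<le> M * (1 - lam) / 2" using M lam by simp
    moreover have "M * (1 - lam) / 2 \<le> 1" unfolding e1 using M Ml0 Ml1 by argo
    ultimately show "0 \<le> a1 t" "a1 t \<le> 1" "0 \<le> a2 t" "a2 t \<le> 1" "a1 t + a2 t \<le> M"
      unfolding a1_def a2_def using M lam by (auto simp: field_simps)
  qed
  have cbb: "continuous_on UNIV bb" unfolding bb_def by (intro continuous_intros) auto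
  have cdd: "continuous_on UNIV dd" unfolding dd_def by (intro continuous_intros) auto
  have cy1: "continuous_on {a..b} y1" for a b unfolding y1_def
    by (intro continuous_intros continuous_on_subset[OF cbb] continuous_on_subset[OF cdd]) auto
  have cy2: "continuous_on {a..b} y2" for a b unfolding y2_def
    by (intro continuous_intros continuous_on_subset[OF cbb] continuous_on_subset[OF cdd]) auto
  have derL: "(y1 has_real_derivative (- y1 x + (1 - a1 x) * ((y1 x + y2 x) / 2))) (at x)
            \<and> (y2 has_real_derivative (- y2 x + (1 - a2 x) * ((y1 x + y2 x) / 2))) (at x)" if x: "x < ts" for x
  proof -
    have eqL: "bb s = b0 \<and> dd s = exp (- s) * d0" if "s \<in> {..<ts}" for s
      using that unfolding bb_def dd_def by (auto simp: exp_minus field_simps)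
    have d1: "((\<lambda>s. b0 + exp (- s) * d0 / 2) has_real_derivative (- exp (- x) * d0 / 2)) (at x)"
      by (auto intro!: derivative_eq_intros)
    have d2: "((\<lambda>s. b0 - exp (- s) * d0 / 2) has_real_derivative (exp (- x) * d0 / 2)) (at x)"
      by (auto intro!: derivative_eq_intros)
    have "(y1 has_real_derivative (- exp (- x) * d0 / 2)) (at x)"
      by (rule has_field_derivative_transform_within_open[OF d1 _ _, of "{..<ts}"]) (use x eqL in \<open>auto simp: y1_def\<close>)
    moreover have "(y2 has_real_derivative (exp (- x) * d0 / 2)) (at x)"
      by (rule has_field_derivative_transform_within_open[OF d2 _ _, of "{..<ts}"]) (use x eqL in \<open>auto simp: y2_def\<close>)
    moreover have "- exp (- x) * d0 / 2 = - y1 x + (1 - a1 x) * ((y1 x + y2 x) / 2)"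
      "exp (- x) * d0 / 2 = - y2 x + (1 - a2 x) * ((y1 x + y2 x) / 2)"
      using eqL[of x] x unfolding y1_def y2_def a1_def a2_def by (auto simp: field_simps)
    ultimately show ?thesis by simp
  qed
  have derR: "(y1 has_real_derivative (- y1 x + (1 - a1 x) * ((y1 x + y2 x) / 2))) (at x)
            \<and> (y2 has_real_derivative (- y2 x + (1 - a2 x) * ((y1 x + y2 x) / 2))) (at x)" if x: "ts < x" for x
  proof -
    define C where "C = d0 + cc * exp ts"
    define E where "E = (\<lambda>s. exp (- M * (s - ts) / 2))"
    have eqR: "bb s = b0 * E s \<and> dd s = exp (- s) * C - cc * E s" if "s \<in> {ts<..}" for s
      using that unfolding bb_def dd_def E_def C_def by (auto simp: max_def min_def)
    have dE: "(E has_real_derivative (E x * (- M / 2))) (at x)"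
      unfolding E_def by (auto intro!: derivative_eq_intros simp: field_simps)
    have d1: "((\<lambda>s. b0 * E s + (exp (- s) * C - cc * E s) / 2) has_real_derivative
        (b0 * (E x * (- M / 2)) + (- exp (- x) * C - cc * (E x * (- M / 2))) / 2)) (at x)"
      by (auto intro!: derivative_eq_intros dE simp: field_simps)
    have d2: "((\<lambda>s. b0 * E s - (exp (- s) * C - cc * E s) / 2) has_real_derivative
        (b0 * (E x * (- M / 2)) - (- exp (- x) * C - cc * (E x * (- M / 2))) / 2)) (at x)"
      by (auto intro!: derivative_eq_intros dE simp: field_simps)
    have D1: "(y1 has_real_derivative (b0 * (E x * (- M / 2)) + (- exp (- x) * C - cc * (E x * (- M / 2))) / 2)) (at x)"
      by (rule has_field_derivative_transform_within_open[OF d1 _ _, of "{ts<..}"]) (use x eqR in \<open>auto simp: y1_def\<close>)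
    have D2: "(y2 has_real_derivative (b0 * (E x * (- M / 2)) - (- exp (- x) * C - cc * (E x * (- M / 2))) / 2)) (at x)"
      by (rule has_field_derivative_transform_within_open[OF d2 _ _, of "{ts<..}"]) (use x eqR in \<open>auto simp: y2_def\<close>)
    have ccM: "cc * M = 2*cc - 2*lam*b0*M"
    proof -
      have kM2: "k * M = 2*k - 2*M" using kM by (simp add: algebra_simps)
      have "cc * M = lam * b0 * (k * M)" unfolding cc_def by (simp add: mult.assoc)
      also have "\<dots> = lam * b0 * (2*k - 2*M)" using kM2 by simp
      also have "\<dots> = 2*cc - 2*lam*b0*M" unfolding cc_def by (simp add: algebra_simps)
      finally show ?thesis .
    qed
    have ax: "a1 x = M * (1 + lam) / 2" "a2 x = M * (1 - lam) / 2" using x unfolding a1_def a2_def by auto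
    have yx: "y1 x = b0 * E x + (exp (- x) * C - cc * E x) / 2" "y2 x = b0 * E x - (exp (- x) * C - cc * E x) / 2"
      using eqR[of x] x unfolding y1_def y2_def by auto
    show ?thesis unfolding ax yx
      using D1 D2 alg1[OF ccM, of "E x" "exp (- x)" C] alg2[OF ccM, of "E x" "exp (- x)" C] by simp
  qed
  have tr: "is_traj T a1 a2 y1 y2"
    unfolding is_traj_def
  proof (intro conjI ballI)
    show "continuous_on {0..T} y1" "continuous_on {0..T} y2" using cy1 cy2 by auto
    fix t assume t: "t \<in> {0..T}"
    show "((\<lambda>s. - y1 s + (1 - a1 s) * ((y1 s + y2 s) / 2)) has_integral (y1 t - y1 0)) {0..t}"
    proof (rule fundamental_theorem_of_calculus_interior_strong[of "{ts}"])
      fix x assume "x \<in> {0<..<t} - {ts}"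
      then have "x < ts \<or> ts < x" by auto
      then show "(y1 has_vector_derivative - y1 x + (1 - a1 x) * ((y1 x + y2 x) / 2)) (at x)"
        using derL derR by (auto simp: has_real_derivative_iff_has_vector_derivative[symmetric])
    qed (use t cy1 in auto)
    show "((\<lambda>s. - y2 s + (1 - a2 s) * ((y1 s + y2 s) / 2)) has_integral (y2 t - y2 0)) {0..t}"
    proof (rule fundamental_theorem_of_calculus_interior_strong[of "{ts}"])
      fix x assume "x \<in> {0<..<t} - {ts}"
      then have "x < ts \<or> ts < x" by auto
      then show "(y2 has_vector_derivative - y2 x + (1 - a2 x) * ((y1 x + y2 x) / 2)) (at x)"
        using derL derR by (auto simp: has_real_derivative_iff_has_vector_derivative[symmetric])
    qed (use t cy2 in auto)
  qed
  have y10: "y1 0 = b0 + d0 / 2" and y20: "y2 0 = b0 - d0 / 2"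
    unfolding y1_def y2_def bb_def dd_def using ts by (auto simp: max_def min_def)
  have bbT: "bb T = b0 * exp (- M * (T - ts) / 2)" unfolding bb_def using ts by (simp add: max_def)
  have ddT: "dd T = exp (- T) * (d0 - cc * (exp (T - M * (T - ts) / 2) - exp ts))"
  proof -
    have "exp (- T) * exp (T - M * (T - ts) / 2) = exp (- M * (T - ts) / 2)"
      by (simp add: exp_add[symmetric])
    then show ?thesis unfolding dd_def using ts by (simp add: max_def min_def algebra_simps)
  qed
  have "cost T y1 y2 = (bb T)^2 + (dd T)^2 / 4"
    unfolding cost_def y1_def y2_def by (simp add: power2_eq_square field_simps)
  also have "\<dots> = (b0 * exp (- M * (T - ts) / 2))^2
        + (exp (- T) * (d0 - lam * b0 * (2 * M / (2 - M)) * (exp (T - M * (T - ts) / 2) - exp ts)))^2 / 4"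
    unfolding bbT ddT cc_def k_def by simp
  finally show ?thesis using adm tr y10 y20 by blast
qed




lemma t0_iff:
  fixes T M b0 d0 :: real
  assumes M: "0 < M" "M < 1" and b0: "0 < b0" and d0: "0 < d0"
  shows "T \<ge> 2 / (2 - M) * ln ((2 - M) / (2 * M) * (d0 / b0) + 1)
     \<longleftrightarrow> exp (- T) * (d0 - b0 * (2 * M / (2 - M)) * (exp (T - M * (T - 0) / 2) - exp 0)) \<le> 0"
proof -
  define k where "k = 2 * M / (2 - M)"
  define A where "A = (2 - M) / (2 * M) * (d0 / b0) + 1"
  define y where "y = (2 - M) / 2 * T"
  have k: "0 < k" unfolding k_def using M by simp
  have A: "A = d0 / (b0 * k) + 1" unfolding A_def k_def using M b0 by (simp add: field_simps)
  have "0 < d0 / (b0 * k)" using d0 b0 k by (simp add: divide_pos_pos)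
  then have Apos: "0 < A" unfolding A by linarith
  have "exp (- T) * (d0 - b0 * k * (exp (T - M * (T - 0) / 2) - exp 0)) \<le> 0
      \<longleftrightarrow> d0 \<le> b0 * k * (exp y - 1)"
  proof -
    have "T - M * (T - 0) / 2 = y" unfolding y_def by (simp add: field_simps)
    then show ?thesis by (simp add: mult_le_0_iff)
  qed
  also have "\<dots> \<longleftrightarrow> d0 / (b0 * k) \<le> exp y - 1" using b0 k by (simp add: pos_divide_le_eq mult.commute)
  also have "\<dots> \<longleftrightarrow> A \<le> exp y" unfolding A by linarith
  also have "\<dots> \<longleftrightarrow> ln A \<le> y" using Apos by (metis exp_gt_zero ln_exp ln_le_cancel_iff)
  also have "\<dots> \<longleftrightarrow> 2 / (2 - M) * ln A \<le> T" unfolding y_def using M by (simp add: field_simps)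
  finally show ?thesis unfolding A_def k_def by auto
qed

lemma improve_left:
  fixes T M b0 d0 ts1 :: real
  assumes b0: "0 < b0" and M: "0 < M" "M < 1" and ts1: "0 < ts1"
    and L0: "exp (- T) * (d0 - b0 * k * (exp (T - M * (T - ts1) / 2) - exp ts1)) = 0"
  shows "\<exists>ts. 0 \<le> ts \<and> ts < ts1 \<and>
     (b0 * exp (- M * (T - ts) / 2))^2 + (exp (- T) * (d0 - b0 * k * (exp (T - M * (T - ts) / 2) - exp ts)))^2 / 4
       < (b0 * exp (- M * (T - ts1) / 2))^2"
proof -
  define B where "B = (\<lambda>ts. b0 * exp (- M * (T - ts) / 2))"
  define L where "L = (\<lambda>ts. exp (- T) * (d0 - b0 * k * (exp (T - M * (T - ts) / 2) - exp ts)))"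
  define L' where "L' = (\<lambda>ts. exp (- T) * (- (b0 * k) * (exp (T - M * (T - ts) / 2) * (M / 2) - exp ts)))"
  define f where "f = (\<lambda>ts. (B ts)^2 + (L ts)^2 / 4)"
  have dB: "(B has_real_derivative (B x * (M / 2))) (at x)" for x
    unfolding B_def by (auto intro!: derivative_eq_intros simp: field_simps)
  have dL: "(L has_real_derivative L' x) (at x)" for x
    unfolding L_def L'_def by (auto intro!: derivative_eq_intros simp: field_simps)
  have df: "(f has_real_derivative (2 * B ts1 * (B ts1 * (M / 2)) + 2 * L ts1 * L' ts1 / 4)) (at ts1)"
    unfolding f_def by (auto intro!: derivative_eq_intros dB dL)
  have Lz: "L ts1 = 0" using L0 unfolding L_def .
  have pos: "0 < 2 * B ts1 * (B ts1 * (M / 2)) + 2 * L ts1 * L' ts1 / 4"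
    unfolding Lz B_def using b0 M by simp
  obtain d where d: "d > 0" "\<And>h. h > 0 \<Longrightarrow> h < d \<Longrightarrow> f (ts1 - h) < f ts1"
    using DERIV_pos_inc_left[OF df pos] by blast
  define h where "h = min (d / 2) ts1"
  have h: "0 < h" "h < d" "h \<le> ts1" unfolding h_def using d ts1 by auto
  have "f (ts1 - h) < f ts1" using d(2) h by auto
  moreover have "f ts1 = (B ts1)^2" unfolding f_def Lz by simp
  ultimately show ?thesis
    by (intro exI[of _ "ts1 - h"]) (use h in \<open>auto simp: f_def B_def L_def\<close>)
qed




theorem theorem2:
  fixes T M :: real and a1 a2 x1 x2 :: "real \<Rightarrow> real"
  assumes "T > 0" and "0 < M" and "M < 1"
    and "(x1 0 + x2 0) / 2 > 0" and "x1 0 > x2 0"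
    and "optimal T M a1 a2 x1 x2"
    and "\<forall>t\<in>{0..T}. x1 t \<ge> x2 t"
  defines "t0 \<equiv> 2 / (2 - M) * ln ((2 - M) / (2 * M) * ((x1 0 - x2 0) / ((x1 0 + x2 0) / 2)) + 1)"
  shows "(T \<ge> t0 \<longleftrightarrow> x1 T = x2 T)
         \<and> (T \<ge> t0 \<longrightarrow>
              (AE t in lebesgue_on {0..T}. a1 t + a2 t = M) \<and>
              (\<forall>t\<in>{0..T}. (x1 t + x2 t) / 2 = (x1 0 + x2 0) / 2 * exp (- M * t / 2)))
         \<and> (T < t0 \<longrightarrow> (\<exists>ts\<in>{0..<T}.
              (AE t in lebesgue. t \<in> {0..<ts} \<longrightarrow> a1 t = 0 \<and> a2 t = 0) \<and>
              (AE t in lebesgue. t \<in> {ts..T} \<longrightarrow> a1 t = M \<and> a2 t = 0)))"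
proof -
  note T = assms(1) and M = assms(2,3)
  have adm: "admissible T M a1 a2" and tr: "is_traj T a1 a2 x1 x2"
    and opt: "\<And>b1 b2 y1 y2. admissible T M b1 b2 \<Longrightarrow> is_traj T b1 b2 y1 y2 \<Longrightarrow>
        y1 0 = x1 0 \<Longrightarrow> y2 0 = x2 0 \<Longrightarrow> cost T x1 x2 \<le> cost T y1 y2"
    using assms(6) unfolding optimal_def by auto
  define b0 where "b0 = (x1 0 + x2 0) / 2"
  define d0 where "d0 = x1 0 - x2 0"
  define k where "k = 2 * M / (2 - M)"
  have b0p: "0 < b0" using assms(4) unfolding b0_def .
  have d0p: "0 < d0" using assms(5) unfolding d0_def by simp
  have kp: "0 < k" unfolding k_def using M by simp
  define Bf where "Bf = (\<lambda>ts. b0 * exp (- M * (T - ts) / 2))"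
  define Lf where "Lf = (\<lambda>ts. exp (- T) * (d0 - b0 * k * (exp (T - M * (T - ts) / 2) - exp ts)))"
  define ts0 where "ts0 = T - integral {0..T} (\<lambda>s. a1 s + a2 s) / M"
  have ts0: "0 \<le> ts0" "ts0 \<le> T" using lower(1,2)[OF T M adm tr assms(4)] unfolding ts0_def by auto
  have bT: "(x1 T + x2 T) / 2 = Bf ts0"
    using lower(3)[OF T M adm tr assms(4)] unfolding Bf_def ts0_def b0_def by simp
  have dT: "x1 T - x2 T \<ge> Lf ts0"
    using lower(4)[OF T M adm tr assms(4)] unfolding Lf_def ts0_def b0_def d0_def k_def by simp
  have eqcase: "x1 T - x2 T = Lf ts0 \<Longrightarrow> integral {0..ts0} (\<lambda>s. a1 s + a2 s) = 0 \<and> (AE t in lebesgue_on {0..T}. a2 t = 0)"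
    using lower(5)[OF T M adm tr assms(4)] unfolding Lf_def ts0_def b0_def d0_def k_def by simp
  have costx: "cost T x1 x2 = ((x1 T + x2 T) / 2)^2 + (x1 T - x2 T)^2 / 4"
    unfolding cost_def by (simp add: power2_eq_square field_simps)
  have comp: "cost T x1 x2 \<le> (Bf ts)^2 + (exp (- T) * (d0 - lam * b0 * k * (exp (T - M * (T - ts) / 2) - exp ts)))^2 / 4"
    if lam: "0 \<le> lam" "lam \<le> 1" and ts: "0 \<le> ts" "ts \<le> T" for lam ts
  proof -
    obtain c1 c2 y1 y2 where c: "admissible T M c1 c2" "is_traj T c1 c2 y1 y2"
      "y1 0 = b0 + d0 / 2" "y2 0 = b0 - d0 / 2"
      "cost T y1 y2 = (b0 * exp (- M * (T - ts) / 2))^2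
        + (exp (- T) * (d0 - lam * b0 * (2 * M / (2 - M)) * (exp (T - M * (T - ts) / 2) - exp ts)))^2 / 4"
      using competitor[OF T M lam ts, of b0 d0] by blast
    have "y1 0 = x1 0" "y2 0 = x2 0" using c(3,4) unfolding b0_def d0_def by (simp_all add: field_simps)
    then have "cost T x1 x2 \<le> cost T y1 y2" using opt c(1,2) by blast
    then show ?thesis using c(5) unfolding Bf_def k_def by simp
  qed
  have compq: "cost T x1 x2 \<le> (Bf ts)^2 + (Lf ts)^2 / 4" if "0 \<le> ts" "ts \<le> T" for ts
    using comp[of 1 ts] that unfolding Lf_def by simp
  define t0' where "t0' = 2 / (2 - M) * ln ((2 - M) / (2 * M) * ((x1 0 - x2 0) / ((x1 0 + x2 0) / 2)) + 1)"
  have t0eq: "t0 = t0'" unfolding t0_def t0'_def ..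
  have iff0: "T \<ge> t0 \<longleftrightarrow> Lf 0 \<le> 0"
    using t0_iff[OF M b0p d0p, of T] unfolding t0eq t0'_def Lf_def k_def b0_def d0_def by simp
  have Bmono: "Bf s \<le> Bf t" if "s \<le> t" for s t
    unfolding Bf_def using b0p that M by (simp add: mult_le_cancel_left_pos)
  have Bpos: "0 < Bf s" for s unfolding Bf_def using b0p by simp
  note af = adm_facts[OF adm]
  have m1: "a1 \<in> borel_measurable (lebesgue_on {0..T})" and m2: "a2 \<in> borel_measurable (lebesgue_on {0..T})"
    using adm unfolding admissible_def by auto
  have Tin: "T \<in> {0..T}" using T by simp
  have aeM: "AE t in lebesgue_on {u..v}. a1 t + a2 t = M"
    if uv: "0 \<le> u" "u \<le> v" "v \<le> T" and I: "integral {u..v} (\<lambda>s. a1 s + a2 s) = M * (v - u)" for u v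
  proof -
    have iuv: "(\<lambda>s. a1 s + a2 s) integrable_on {u..v}" using af(2) integrable_on_subinterval uv by fastforce
    have "integral {u..v} (\<lambda>s. M - (a1 s + a2 s)) = M * (v - u) - integral {u..v} (\<lambda>s. a1 s + a2 s)"
      using Henstock_Kurzweil_Integration.integral_diff[OF integrable_const_ivl iuv, of M] uv by simp
    then have z: "integral {u..v} (\<lambda>s. M - (a1 s + a2 s)) = 0" using I by simp
    have mm: "(\<lambda>s. M - (a1 s + a2 s)) \<in> borel_measurable (lebesgue_on {u..v})"
    proof -
      have "(\<lambda>s. M - (a1 s + a2 s)) \<in> borel_measurable (lebesgue_on {0..T})" using m1 m2 by measurable
      then show ?thesis by (rule measurable_restrict_mono) (use uv in auto)
    qed
    have "AE t in lebesgue_on {u..v}. M - (a1 t + a2 t) = 0"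
    proof (rule ae_zero_of_integral[OF mm _ _ z])
      fix x assume "x \<in> {u..v}"
      then have "x \<in> {0..T}" using uv by auto
      then show "\<bar>M - (a1 x + a2 x)\<bar> \<le> M" "0 \<le> M - (a1 x + a2 x)" using af(3)[of x] by auto
    qed
    then show ?thesis by eventually_elim auto
  qed
  have ae0: "AE t in lebesgue_on {u..v}. a1 t = 0 \<and> a2 t = 0"
    if uv: "0 \<le> u" "u \<le> v" "v \<le> T" and I: "integral {u..v} (\<lambda>s. a1 s + a2 s) = 0" for u v
  proof -
    have mm: "(\<lambda>s. a1 s + a2 s) \<in> borel_measurable (lebesgue_on {u..v})"
      by (rule measurable_restrict_mono[OF af(1)]) (use uv in auto)
    have "AE t in lebesgue_on {u..v}. a1 t + a2 t = 0"
    proof (rule ae_zero_of_integral[OF mm _ _ I])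
      fix x assume "x \<in> {u..v}"
      then have "x \<in> {0..T}" using uv by auto
      then show "\<bar>a1 x + a2 x\<bar> \<le> 2" "0 \<le> a1 x + a2 x" using af(3)[of x] by auto
    qed
    moreover have "AE t in lebesgue_on {u..v}. t \<in> {u..v}" by (rule AE_I2) simp
    ultimately show ?thesis
    proof eventually_elim
      case (elim t)
      then have "t \<in> {0..T}" using uv by auto
      then show ?case using elim af(3)[of t] by auto
    qed
  qed
  have caseI: "x1 T = x2 T \<and> (AE t in lebesgue_on {0..T}. a1 t + a2 t = M)
      \<and> (\<forall>t\<in>{0..T}. (x1 t + x2 t) / 2 = (x1 0 + x2 0) / 2 * exp (- M * t / 2))" if L0: "Lf 0 \<le> 0"
  proof -
    define E where "E = exp (T - M * T / 2)"
    have E1: "1 < E" unfolding E_def using T M by (simp add: algebra_simps)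
    define lam where "lam = d0 / (b0 * k * (E - 1))"
    have den: "0 < b0 * k * (E - 1)" using b0p kp E1 by simp
    have lam0: "0 \<le> lam" unfolding lam_def using d0p den by simp
    have "d0 \<le> b0 * k * (E - 1)"
    proof -
      have "exp (- T) * (d0 - b0 * k * (E - 1)) \<le> 0" using L0 unfolding Lf_def E_def by simp
      then show ?thesis by (simp add: mult_le_0_iff)
    qed
    then have lam1: "lam \<le> 1" unfolding lam_def using den by simp
    have "lam * (b0 * k * (E - 1)) = d0"
    proof -
      define X where "X = b0 * k * (E - 1)"
      have "0 < X" using den unfolding X_def .
      then have "X \<noteq> 0" by simp
      then have "d0 / X * X = d0" by simp
      then show ?thesis unfolding lam_def X_def .
    qed
    then have "lam * b0 * k * (E - 1) = d0" by (simp add: mult.assoc)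
    then have "cost T x1 x2 \<le> (Bf 0)^2"
      using comp[OF lam0 lam1 order_refl T[THEN less_imp_le]] unfolding E_def by simp
    then have c1: "((x1 T + x2 T) / 2)^2 + (x1 T - x2 T)^2 / 4 \<le> (Bf 0)^2" using costx by simp
    have "Bf 0 \<le> Bf ts0" using Bmono ts0 by simp
    then have "(Bf 0)^2 \<le> ((x1 T + x2 T) / 2)^2" unfolding bT using Bpos[of 0] by (simp add: power_mono)
    moreover have q0: "0 \<le> (x1 T - x2 T)^2" by simp
    ultimately have sq: "(x1 T - x2 T)^2 = 0" and bb: "((x1 T + x2 T) / 2)^2 = (Bf 0)^2" using c1 by argo+
    from sq have xT: "x1 T = x2 T" by simp
    have "Bf ts0 = Bf 0" using bb unfolding bT using Bpos[of 0] Bpos[of ts0] by (simp add: power2_eq_iff_nonneg)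
    then have "ts0 = 0" unfolding Bf_def using b0p M by simp
    then have FT: "integral {0..T} (\<lambda>s. a1 s + a2 s) = M * T" unfolding ts0_def using M by (simp add: field_simps)
    have ae: "AE t in lebesgue_on {0..T}. a1 t + a2 t = M" using aeM[of 0 T] T FT by simp
    have bform: "(x1 t + x2 t) / 2 = (x1 0 + x2 0) / 2 * exp (- M * t / 2)" if t: "t \<in> {0..T}" for t
    proof -
      have d1: "integral {0..T} (\<lambda>s. a1 s + a2 s) - integral {0..t} (\<lambda>s. a1 s + a2 s) = integral {t..T} (\<lambda>s. a1 s + a2 s)"
        and d2: "integral {t..T} (\<lambda>s. a1 s + a2 s) \<le> M * (T - t)"
        using F_diff[OF adm _ _ order_refl, of t] t by auto
      have d3: "integral {0..t} (\<lambda>s. a1 s + a2 s) \<le> M * t"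
        using F_diff(1,3)[OF adm order_refl _ _, of t] t by auto
      have "integral {0..t} (\<lambda>s. a1 s + a2 s) = M * t" using d1 d2 d3 FT by (simp add: algebra_simps)
      then show ?thesis using traj_formulas(1)[OF T adm tr t] by simp
    qed
    show ?thesis using xT ae bform by blast
  qed
  have caseII: "x1 T \<noteq> x2 T \<and> (\<exists>ts\<in>{0..<T}.
              (AE t in lebesgue. t \<in> {0..<ts} \<longrightarrow> a1 t = 0 \<and> a2 t = 0) \<and>
              (AE t in lebesgue. t \<in> {ts..T} \<longrightarrow> a1 t = M \<and> a2 t = 0))" if L0: "0 < Lf 0"
  proof -
    have cx: "cost T x1 x2 = (Bf ts0)^2 + (x1 T - x2 T)^2 / 4" using costx bT by simp
    have Lpos: "0 < Lf ts0"
    proof (rule ccontr)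
      assume "\<not> 0 < Lf ts0"
      then have "Lf ts0 \<le> 0" by simp
      have cL: "continuous_on {0..ts0} Lf" unfolding Lf_def by (intro continuous_intros) auto
      obtain ts1 where ts1: "0 \<le> ts1" "ts1 \<le> ts0" "Lf ts1 = 0"
        using IVT2'[of Lf ts0 0 0, OF \<open>Lf ts0 \<le> 0\<close> _ ts0(1) cL] L0 by auto
      have ts1p: "0 < ts1" using ts1 L0 by (cases "ts1 = 0") auto
      obtain ts where ts: "0 \<le> ts" "ts < ts1"
        "(b0 * exp (- M * (T - ts) / 2))^2 + (exp (- T) * (d0 - b0 * k * (exp (T - M * (T - ts) / 2) - exp ts)))^2 / 4
           < (b0 * exp (- M * (T - ts1) / 2))^2"
        using improve_left[OF b0p M ts1p, of T d0 k] ts1(3) unfolding Lf_def by blast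
      have "cost T x1 x2 < (Bf ts1)^2"
        using compq[of ts] ts ts1 ts0 unfolding Bf_def Lf_def by simp
      also have "\<dots> \<le> (Bf ts0)^2" using Bmono[OF ts1(2)] Bpos[of ts1] by (simp add: power_mono)
      also have "\<dots> \<le> cost T x1 x2" using cx by simp
      finally show False by simp
    qed
    have dTeq: "x1 T - x2 T = Lf ts0"
    proof -
      have "cost T x1 x2 \<le> (Bf ts0)^2 + (Lf ts0)^2 / 4" using compq ts0 by simp
      then have "(x1 T - x2 T)^2 \<le> (Lf ts0)^2" using cx by simp
      moreover have "(Lf ts0)^2 \<le> (x1 T - x2 T)^2" using dT Lpos by (simp add: power_mono)
      ultimately have "(x1 T - x2 T)^2 = (Lf ts0)^2" by simp
      then show ?thesis using dT Lpos by (simp add: power2_eq_iff_nonneg)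
    qed
    have ne: "x1 T \<noteq> x2 T" using dTeq Lpos by simp
    have tsT: "ts0 < T"
    proof (rule ccontr)
      assume "\<not> ts0 < T"
      then have tT: "ts0 = T" using ts0 by simp
      have LT: "Lf T = exp (- T) * d0" unfolding Lf_def by simp
      have E1: "1 < exp (T - M * T / 2)" using T M by (simp add: algebra_simps)
      have "Lf 0 < Lf T" unfolding LT unfolding Lf_def using E1 b0p kp by simp
      then have "(Lf 0)^2 < (Lf T)^2" using L0 by (simp add: power_strict_mono)
      moreover have "Bf 0 \<le> Bf T" using Bmono T by simp
      then have "(Bf 0)^2 \<le> (Bf T)^2" using Bpos[of 0] by (simp add: power_mono)
      ultimately have "(Bf 0)^2 + (Lf 0)^2 / 4 < (Bf T)^2 + (Lf T)^2 / 4" by simp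
      moreover have "cost T x1 x2 = (Bf T)^2 + (Lf T)^2 / 4" using cx dTeq tT by simp
      moreover have "cost T x1 x2 \<le> (Bf 0)^2 + (Lf 0)^2 / 4" using compq T by simp
      ultimately show False by simp
    qed
    obtain I0: "integral {0..ts0} (\<lambda>s. a1 s + a2 s) = 0" and A2: "AE t in lebesgue_on {0..T}. a2 t = 0"
      using eqcase[OF dTeq] by blast
    have ae1: "AE t in lebesgue_on {0..ts0}. a1 t = 0 \<and> a2 t = 0" using ae0[OF order_refl ts0(1) ts0(2) I0] .
    have FT: "integral {0..T} (\<lambda>s. a1 s + a2 s) = M * (T - ts0)" unfolding ts0_def using M by (simp add: field_simps)
    have I2: "integral {ts0..T} (\<lambda>s. a1 s + a2 s) = M * (T - ts0)"
      using F_diff(1)[OF adm ts0(1) ts0(2) order_refl] FT I0 by simp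
    have ae2: "AE t in lebesgue_on {ts0..T}. a1 t + a2 t = M" using aeM[OF ts0(1) ts0(2) order_refl I2] .
    have L1: "AE t in lebesgue. t \<in> {0..ts0} \<longrightarrow> a1 t = 0 \<and> a2 t = 0"
      using ae1 by (subst (asm) AE_restrict_space_iff) auto
    have L2: "AE t in lebesgue. t \<in> {ts0..T} \<longrightarrow> a1 t + a2 t = M"
      using ae2 by (subst (asm) AE_restrict_space_iff) auto
    have L3: "AE t in lebesgue. t \<in> {0..T} \<longrightarrow> a2 t = 0"
      using A2 by (subst (asm) AE_restrict_space_iff) auto
    have R1: "AE t in lebesgue. t \<in> {0..<ts0} \<longrightarrow> a1 t = 0 \<and> a2 t = 0"
      using L1 by eventually_elim auto
    have R2: "AE t in lebesgue. t \<in> {ts0..T} \<longrightarrow> a1 t = M \<and> a2 t = 0"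
      using L2 L3 by eventually_elim (use ts0 in auto)
    show ?thesis using ne R1 R2 ts0 tsT by auto
  qed
  show ?thesis
  proof (cases "Lf 0 \<le> 0")
    case True
    then show ?thesis using caseI iff0 by auto
  next
    case False
    then have "0 < Lf 0" by simp
    then show ?thesis using caseII iff0 False by auto
  qed
qed


end
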